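(* Let $R$ be a commutative noetherian ring and let $\mathcal S$ be a subcategory of $R$-modules which is closed under submodules, extensions and direct unions. Then $\mathcal S$ satisfies the condition $C_{\mathfrak a}$ for every ideal $\mathfrak a$ of $R$.
   Context: A subcategory $\mathcal S$ satisfies the condition $C_{\mathfrak a}$ if for every $R$-module $M$: whenever $\Gamma_{\mathfrak a}(M)=M$ and $(0:_M\mathfrak a)\in\mathcal S$, then $M\in\mathcal S$. Closed under direct unions means: if a module is the union of a directed family of submodules each in $\mathcal S$, it lies in $\mathcal S$. *)

theory Defs
  imports "HOL-Algebra.Module" "HOL-Algebra.Ideal_Product" "HOL-Algebra.Ring_Divisibility"
begin

text \<open>A "subcategory" of R-modules is modelled as a predicate S on modules whose carrier
  lives in a fixed (arbitrary) type 'c.\<close>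

definition ideal_pow :: "('r, 'x) ring_scheme \<Rightarrow> 'r set \<Rightarrow> nat \<Rightarrow> 'r set" where
  "ideal_pow R a n = ((\<lambda>J. ideal_prod R a J) ^^ n) (carrier R)"

definition submod :: "('r, 'c) module \<Rightarrow> 'c set \<Rightarrow> ('r, 'c) module" where
  "submod M H = M\<lparr>carrier := H\<rparr>"

definition annih :: "('r, 'x) ring_scheme \<Rightarrow> ('r, 'c) module \<Rightarrow> 'r set \<Rightarrow> 'c set" where
  "annih R M a = {m \<in> carrier M. \<forall>r\<in>a. r \<odot>\<^bsub>M\<^esub> m = \<zero>\<^bsub>M\<^esub>}"

definition torsion :: "('r, 'x) ring_scheme \<Rightarrow> 'r set \<Rightarrow> ('r, 'c) module \<Rightarrow> 'c set" where
  "torsion R a M = {m \<in> carrier M. \<exists>n. \<forall>r\<in>ideal_pow R a n. r \<odot>\<^bsub>M\<^esub> m = \<zero>\<^bsub>M\<^esub>}"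

definition linear_map :: "('r, 'x) ring_scheme \<Rightarrow> ('r, 'c) module \<Rightarrow> ('r, 'c) module \<Rightarrow> ('c \<Rightarrow> 'c) \<Rightarrow> bool" where
  "linear_map R N M f \<longleftrightarrow>
     f \<in> carrier N \<rightarrow> carrier M \<and>
     (\<forall>x\<in>carrier N. \<forall>y\<in>carrier N. f (x \<oplus>\<^bsub>N\<^esub> y) = f x \<oplus>\<^bsub>M\<^esub> f y) \<and>
     (\<forall>r\<in>carrier R. \<forall>x\<in>carrier N. f (r \<odot>\<^bsub>N\<^esub> x) = r \<odot>\<^bsub>M\<^esub> f x)"

definition closed_submodules :: "('r, 'x) ring_scheme \<Rightarrow> (('r, 'c) module \<Rightarrow> bool) \<Rightarrow> bool" where
  "closed_submodules R S \<longleftrightarrow>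
     (\<forall>M H. module R M \<and> S M \<and> submodule H R M \<longrightarrow> S (submod M H))"

definition closed_extensions :: "('r, 'x) ring_scheme \<Rightarrow> (('r, 'c) module \<Rightarrow> bool) \<Rightarrow> bool" where
  "closed_extensions R S \<longleftrightarrow>
     (\<forall>N M K f g. module R N \<and> module R M \<and> module R K \<and>
        linear_map R N M f \<and> inj_on f (carrier N) \<and>
        linear_map R M K g \<and> g ` carrier M = carrier K \<and>
        f ` carrier N = {x \<in> carrier M. g x = \<zero>\<^bsub>K\<^esub>} \<and>
        S N \<and> S K \<longrightarrow> S M)"

definition closed_direct_unions :: "('r, 'x) ring_scheme \<Rightarrow> (('r, 'c) module \<Rightarrow> bool) \<Rightarrow> bool" where
  "closed_direct_unions R S \<longleftrightarrow>
     (\<forall>M F. module R M \<and> F \<noteq> {} \<and>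
        (\<forall>H\<in>F. submodule H R M \<and> S (submod M H)) \<and>
        (\<forall>H1\<in>F. \<forall>H2\<in>F. \<exists>H3\<in>F. H1 \<union> H2 \<subseteq> H3) \<and>
        \<Union>F = carrier M \<longrightarrow> S M)"

definition condition_C :: "('r, 'x) ring_scheme \<Rightarrow> 'r set \<Rightarrow> (('r, 'c) module \<Rightarrow> bool) \<Rightarrow> bool" where
  "condition_C R a S \<longleftrightarrow>
     (\<forall>M. module R M \<and> torsion R a M = carrier M \<and> S (submod M (annih R M a)) \<longrightarrow> S M)"

end

theory Submission
  imports Defs
begin

lemma ann_submodule:
  fixes M :: "('r,'c) module"
  assumes "module R M" "submodule V R M" "B \<subseteq> carrier R"
  shows "submodule {m\<in>V. \<forall>x\<in>B. x \<odot>\<^bsub>M\<^esub> m = \<zero>\<^bsub>M\<^esub>} R M"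
proof -
  interpret module R M by fact
  have V: "V \<subseteq> carrier M" using submoduleE(1)[OF assms(2)] .
  show ?thesis
  proof (rule submoduleI)
    show "{m\<in>V. \<forall>x\<in>B. x \<odot>\<^bsub>M\<^esub> m = \<zero>\<^bsub>M\<^esub>} \<subseteq> carrier M" using V by auto
    show "\<zero>\<^bsub>M\<^esub> \<in> {m\<in>V. \<forall>x\<in>B. x \<odot>\<^bsub>M\<^esub> m = \<zero>\<^bsub>M\<^esub>}"
      using assms(2,3) submodule.axioms(1)[OF assms(2)] subgroup.one_closed by fastforce
    fix a assume a: "a \<in> {m\<in>V. \<forall>x\<in>B. x \<odot>\<^bsub>M\<^esub> m = \<zero>\<^bsub>M\<^esub>}"
    show "\<ominus>\<^bsub>M\<^esub> a \<in> {m\<in>V. \<forall>x\<in>B. x \<odot>\<^bsub>M\<^esub> m = \<zero>\<^bsub>M\<^esub>}"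
      using a V submoduleE(3)[OF assms(2)] smult_r_minus assms(3) by (auto simp: subset_iff)
  next
    fix a b assume a: "a \<in> {m\<in>V. \<forall>x\<in>B. x \<odot>\<^bsub>M\<^esub> m = \<zero>\<^bsub>M\<^esub>}"
      and b: "b \<in> {m\<in>V. \<forall>x\<in>B. x \<odot>\<^bsub>M\<^esub> m = \<zero>\<^bsub>M\<^esub>}"
    show "a \<oplus>\<^bsub>M\<^esub> b \<in> {m\<in>V. \<forall>x\<in>B. x \<odot>\<^bsub>M\<^esub> m = \<zero>\<^bsub>M\<^esub>}"
      using a b V submoduleE(5)[OF assms(2)] smult_r_distr assms(3) by (auto simp: subset_iff)
  next
    fix a x assume a: "a \<in> carrier R" and x: "x \<in> {m\<in>V. \<forall>x\<in>B. x \<odot>\<^bsub>M\<^esub> m = \<zero>\<^bsub>M\<^esub>}"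
    have "\<forall>y\<in>B. y \<odot>\<^bsub>M\<^esub> (a \<odot>\<^bsub>M\<^esub> x) = \<zero>\<^bsub>M\<^esub>"
    proof
      fix y assume y: "y \<in> B"
      have xM: "x \<in> carrier M" and yR: "y \<in> carrier R" using x V y assms(3) by auto
      have x0: "y \<odot>\<^bsub>M\<^esub> x = \<zero>\<^bsub>M\<^esub>" using x y by auto
      have "y \<odot>\<^bsub>M\<^esub> (a \<odot>\<^bsub>M\<^esub> x) = (y \<otimes>\<^bsub>R\<^esub> a) \<odot>\<^bsub>M\<^esub> x"
        using smult_assoc1[OF yR a xM] by simp
      also have "\<dots> = (a \<otimes>\<^bsub>R\<^esub> y) \<odot>\<^bsub>M\<^esub> x" using a yR m_comm by simp
      also have "\<dots> = \<zero>\<^bsub>M\<^esub>" using smult_assoc1[OF a yR xM] x0 a by simp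
      finally show "y \<odot>\<^bsub>M\<^esub> (a \<odot>\<^bsub>M\<^esub> x) = \<zero>\<^bsub>M\<^esub>" .
    qed
    then show "a \<odot>\<^bsub>M\<^esub> x \<in> {m\<in>V. \<forall>x\<in>B. x \<odot>\<^bsub>M\<^esub> m = \<zero>\<^bsub>M\<^esub>}"
      using submoduleE(4)[OF assms(2)] a x by auto
  qed
qed

lemma img_submodule:
  fixes M :: "('r,'c) module"
  assumes "module R M" "submodule V R M" "x \<in> carrier R"
  shows "submodule ((\<lambda>m. x \<odot>\<^bsub>M\<^esub> m) ` V) R M"
proof -
  interpret module R M by fact
  have V: "V \<subseteq> carrier M" using submoduleE(1)[OF assms(2)] .
  show ?thesis
  proof (rule submoduleI)
    show "(\<lambda>m. x \<odot>\<^bsub>M\<^esub> m) ` V \<subseteq> carrier M" using V assms(3) by auto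
    have "\<zero>\<^bsub>M\<^esub> \<in> V" using submodule.axioms(1)[OF assms(2)] subgroup.one_closed by fastforce
    then show "\<zero>\<^bsub>M\<^esub> \<in> (\<lambda>m. x \<odot>\<^bsub>M\<^esub> m) ` V"
      using assms(3) by (metis image_eqI smult_r_null)
  next
    fix a assume "a \<in> (\<lambda>m. x \<odot>\<^bsub>M\<^esub> m) ` V"
    then obtain v where v: "v \<in> V" "a = x \<odot>\<^bsub>M\<^esub> v" by auto
    have "\<ominus>\<^bsub>M\<^esub> a = x \<odot>\<^bsub>M\<^esub> (\<ominus>\<^bsub>M\<^esub> v)" using v V assms(3) smult_r_minus by auto
    then show "\<ominus>\<^bsub>M\<^esub> a \<in> (\<lambda>m. x \<odot>\<^bsub>M\<^esub> m) ` V" using submoduleE(3)[OF assms(2)] v by auto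
  next
    fix a b assume "a \<in> (\<lambda>m. x \<odot>\<^bsub>M\<^esub> m) ` V" "b \<in> (\<lambda>m. x \<odot>\<^bsub>M\<^esub> m) ` V"
    then obtain v w where v: "v \<in> V" "a = x \<odot>\<^bsub>M\<^esub> v" "w \<in> V" "b = x \<odot>\<^bsub>M\<^esub> w" by auto
    have "a \<oplus>\<^bsub>M\<^esub> b = x \<odot>\<^bsub>M\<^esub> (v \<oplus>\<^bsub>M\<^esub> w)" using v V assms(3) smult_r_distr by (metis subsetD)
    then show "a \<oplus>\<^bsub>M\<^esub> b \<in> (\<lambda>m. x \<odot>\<^bsub>M\<^esub> m) ` V" using submoduleE(5)[OF assms(2)] v by auto
  next
    fix r a assume r: "r \<in> carrier R" and "a \<in> (\<lambda>m. x \<odot>\<^bsub>M\<^esub> m) ` V"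
    then obtain v where v: "v \<in> V" "a = x \<odot>\<^bsub>M\<^esub> v" by auto
    have "r \<odot>\<^bsub>M\<^esub> a = (r \<otimes>\<^bsub>R\<^esub> x) \<odot>\<^bsub>M\<^esub> v" using v V r assms(3) smult_assoc1 by (metis subsetD)
    also have "\<dots> = x \<odot>\<^bsub>M\<^esub> (r \<odot>\<^bsub>M\<^esub> v)" using v V r assms(3) smult_assoc1 m_comm by (metis subsetD)
    finally show "r \<odot>\<^bsub>M\<^esub> a \<in> (\<lambda>m. x \<odot>\<^bsub>M\<^esub> m) ` V" using submoduleE(4)[OF assms(2)] v r by auto
  qed
qed

lemma sub_closed:
  fixes M :: "('r,'c) module"
  assumes "module R M" "closed_submodules R S" "submodule T R M" "S (submod M T)"
    "submodule H R M" "H \<subseteq> T"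
  shows "S (submod M H)"
proof -
  interpret module R M by fact
  have mT: "module R (submod M T)" unfolding submod_def
    using submodule.submodule_is_module[OF assms(3) assms(1)] .
  have mH: "module R ((submod M T)\<lparr>carrier := H\<rparr>)" unfolding submod_def
    using submodule.submodule_is_module[OF assms(5) assms(1)] by simp
  have "submodule H R (submod M T)"
    using module.module_incl_imp_submodule[OF mT _ mH] assms(6) by (simp add: submod_def)
  then have "S (submod (submod M T) H)" using assms(2) mT assms(4) unfolding closed_submodules_def by blast
  then show ?thesis by (simp add: submod_def)
qed

lemma ext_step:
  fixes M :: "('r,'c) module"
  assumes "module R M" "closed_submodules R S" "closed_extensions R S"
    "submodule V R M" "x \<in> carrier R" "submodule T R M" "S (submod M T)"
    "(\<lambda>m. x \<odot>\<^bsub>M\<^esub> m) ` V \<subseteq> T"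
    "S (submod M {m\<in>V. x \<odot>\<^bsub>M\<^esub> m = \<zero>\<^bsub>M\<^esub>})"
  shows "S (submod M V)"
proof -
  interpret module R M by fact
  have V: "V \<subseteq> carrier M" using submoduleE(1)[OF assms(4)] .
  define W where "W = {m\<in>V. x \<odot>\<^bsub>M\<^esub> m = \<zero>\<^bsub>M\<^esub>}"
  define I where "I = (\<lambda>m. x \<odot>\<^bsub>M\<^esub> m) ` V"
  have subW: "submodule W R M" unfolding W_def
    using ann_submodule[OF assms(1,4), of "{x}"] assms(5) by simp
  have subI: "submodule I R M" unfolding I_def using img_submodule[OF assms(1,4,5)] .
  have mW: "module R (submod M W)" unfolding submod_def using submodule.submodule_is_module[OF subW assms(1)] .
  have mV: "module R (submod M V)" unfolding submod_def using submodule.submodule_is_module[OF assms(4) assms(1)] .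
  have mI: "module R (submod M I)" unfolding submod_def using submodule.submodule_is_module[OF subI assms(1)] .
  have SI: "S (submod M I)" using sub_closed[OF assms(1,2,6,7) subI] assms(8) unfolding I_def by blast
  have SW: "S (submod M W)" using assms(9) unfolding W_def .
  have f: "linear_map R (submod M W) (submod M V) id"
    unfolding linear_map_def submod_def W_def by auto
  have add: "\<And>a b. a\<in>V \<Longrightarrow> b\<in>V \<Longrightarrow> x \<odot>\<^bsub>M\<^esub> (a \<oplus>\<^bsub>M\<^esub> b) = x \<odot>\<^bsub>M\<^esub> a \<oplus>\<^bsub>M\<^esub> x \<odot>\<^bsub>M\<^esub> b"
    using smult_r_distr[OF assms(5)] V by blast
  have sm: "\<And>r a. r \<in> carrier R \<Longrightarrow> a\<in>V \<Longrightarrow> x \<odot>\<^bsub>M\<^esub> (r \<odot>\<^bsub>M\<^esub> a) = r \<odot>\<^bsub>M\<^esub> (x \<odot>\<^bsub>M\<^esub> a)"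
  proof -
    fix r a assume r: "r \<in> carrier R" and "a \<in> V"
    then have a: "a \<in> carrier M" using V by auto
    have "x \<odot>\<^bsub>M\<^esub> (r \<odot>\<^bsub>M\<^esub> a) = (x \<otimes>\<^bsub>R\<^esub> r) \<odot>\<^bsub>M\<^esub> a" using smult_assoc1[OF assms(5) r a] by simp
    also have "\<dots> = (r \<otimes>\<^bsub>R\<^esub> x) \<odot>\<^bsub>M\<^esub> a" using m_comm[OF assms(5) r] by simp
    also have "\<dots> = r \<odot>\<^bsub>M\<^esub> (x \<odot>\<^bsub>M\<^esub> a)" using smult_assoc1[OF r assms(5) a] by simp
    finally show "x \<odot>\<^bsub>M\<^esub> (r \<odot>\<^bsub>M\<^esub> a) = r \<odot>\<^bsub>M\<^esub> (x \<odot>\<^bsub>M\<^esub> a)" .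
  qed
  have g: "linear_map R (submod M V) (submod M I) (\<lambda>m. x \<odot>\<^bsub>M\<^esub> m)"
    unfolding linear_map_def submod_def I_def using add sm by auto
  have inj: "inj_on id (carrier (submod M W))" by simp
  have surj: "(\<lambda>m. x \<odot>\<^bsub>M\<^esub> m) ` carrier (submod M V) = carrier (submod M I)"
    unfolding submod_def I_def by simp
  have ker: "id ` carrier (submod M W) = {m \<in> carrier (submod M V). x \<odot>\<^bsub>M\<^esub> m = \<zero>\<^bsub>submod M I\<^esub>}"
    unfolding submod_def W_def by auto
  show ?thesis using assms(3) mW mV mI f inj g surj ker SW SI
    unfolding closed_extensions_def by blast
qed

lemma ann_ideal:
  fixes M :: "('r,'c) module"
  assumes "module R M" "m \<in> carrier M"
  shows "ideal {r\<in>carrier R. r \<odot>\<^bsub>M\<^esub> m = \<zero>\<^bsub>M\<^esub>} R"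
proof -
  interpret module R M by fact
  show ?thesis
  proof (rule idealI)
    show "ring R" by (rule ring_axioms)
    show "subgroup {r\<in>carrier R. r \<odot>\<^bsub>M\<^esub> m = \<zero>\<^bsub>M\<^esub>} (add_monoid R)"
    proof (rule group.subgroupI)
      show "group (add_monoid R)" using a_comm_group comm_group_def by blast
      show "{r\<in>carrier R. r \<odot>\<^bsub>M\<^esub> m = \<zero>\<^bsub>M\<^esub>} \<subseteq> carrier (add_monoid R)" by auto
      show "{r\<in>carrier R. r \<odot>\<^bsub>M\<^esub> m = \<zero>\<^bsub>M\<^esub>} \<noteq> {}" using assms(2) by auto
      fix a assume "a \<in> {r\<in>carrier R. r \<odot>\<^bsub>M\<^esub> m = \<zero>\<^bsub>M\<^esub>}"
      then show "inv\<^bsub>add_monoid R\<^esub> a \<in> {r\<in>carrier R. r \<odot>\<^bsub>M\<^esub> m = \<zero>\<^bsub>M\<^esub>}"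
        using smult_l_minus[of a m] assms(2) by (simp add: a_inv_def[symmetric])
    next
      fix a b assume "a \<in> {r\<in>carrier R. r \<odot>\<^bsub>M\<^esub> m = \<zero>\<^bsub>M\<^esub>}" "b \<in> {r\<in>carrier R. r \<odot>\<^bsub>M\<^esub> m = \<zero>\<^bsub>M\<^esub>}"
      then show "a \<otimes>\<^bsub>add_monoid R\<^esub> b \<in> {r\<in>carrier R. r \<odot>\<^bsub>M\<^esub> m = \<zero>\<^bsub>M\<^esub>}"
        using smult_l_distr[of a b m] assms(2) by simp
    qed
  next
    fix a x assume "a \<in> {r\<in>carrier R. r \<odot>\<^bsub>M\<^esub> m = \<zero>\<^bsub>M\<^esub>}" "x \<in> carrier R"
    then show "x \<otimes>\<^bsub>R\<^esub> a \<in> {r\<in>carrier R. r \<odot>\<^bsub>M\<^esub> m = \<zero>\<^bsub>M\<^esub>}"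
      using smult_assoc1[of x a m] assms(2) by simp
  next
    fix a x assume "a \<in> {r\<in>carrier R. r \<odot>\<^bsub>M\<^esub> m = \<zero>\<^bsub>M\<^esub>}" "x \<in> carrier R"
    then show "a \<otimes>\<^bsub>R\<^esub> x \<in> {r\<in>carrier R. r \<odot>\<^bsub>M\<^esub> m = \<zero>\<^bsub>M\<^esub>}"
      using smult_assoc1[of x a m] m_comm[of a x] assms(2) by simp
  qed
qed

theorem proposition3p1:
  fixes R :: "'r ring" and S :: "('r, 'c) module \<Rightarrow> bool"
  assumes "cring R" and "noetherian_ring R"
    and "closed_submodules R S"
    and "closed_extensions R S"
    and "closed_direct_unions R S"
  shows "\<forall>a. ideal a R \<longrightarrow> condition_C R a S"
proof (intro allI impI)
  fix a assume a: "ideal a R"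
  interpret cring R by fact
  obtain A where A: "A \<subseteq> carrier R" "finite A" "a = Idl\<^bsub>R\<^esub> A"
    using noetherian_ring.finetely_gen[OF assms(2) a] by blast
  have aR: "a \<subseteq> carrier R" using ideal.Icarr[OF a] by blast
  have pow0: "ideal_pow R a 0 = carrier R" by (simp add: ideal_pow_def)
  have powS: "\<And>n. ideal_pow R a (Suc n) = ideal_prod R a (ideal_pow R a n)" by (simp add: ideal_pow_def)
  have idl: "\<And>n. ideal (ideal_pow R a n) R"
  proof -
    fix n show "ideal (ideal_pow R a n) R"
      by (induction n) (simp_all add: pow0 powS oneideal ideal_prod_is_ideal a)
  qed
  have powR: "\<And>n. ideal_pow R a n \<subseteq> carrier R" using ideal.Icarr[OF idl] by blast
  show "condition_C R a S"
    unfolding condition_C_def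
  proof (intro allI impI, elim conjE)
    fix M :: "('r,'c) module"
    assume M: "module R M" and tor: "torsion R a M = carrier M"
      and Sann: "S (submod M (annih R M a))"
    interpret M: module R M by fact
    define T where "T n = {m\<in>carrier M. \<forall>r\<in>ideal_pow R a n. r \<odot>\<^bsub>M\<^esub> m = \<zero>\<^bsub>M\<^esub>}" for n
    have Tsub: "submodule (T n) R M" for n
      unfolding T_def using ann_submodule[OF M M.carrier_is_submodule powR] .
    have annsub: "submodule (annih R M a) R M"
      unfolding annih_def using ann_submodule[OF M M.carrier_is_submodule aR] .
    have Tmono: "T n \<subseteq> T (Suc n)" for n
      using ideal_prod_inter[OF a idl[of n]] unfolding T_def powS by blast
    have Tmul: "x \<odot>\<^bsub>M\<^esub> m \<in> T n" if x: "x \<in> a" and m: "m \<in> T (Suc n)" for x m n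
    proof -
      have xR: "x \<in> carrier R" using x aR by blast
      have mM: "m \<in> carrier M" using m unfolding T_def by blast
      have "r \<odot>\<^bsub>M\<^esub> (x \<odot>\<^bsub>M\<^esub> m) = \<zero>\<^bsub>M\<^esub>" if r: "r \<in> ideal_pow R a n" for r
      proof -
        have rR: "r \<in> carrier R" using r powR by blast
        have "x \<otimes>\<^bsub>R\<^esub> r \<in> ideal_pow R a (Suc n)" unfolding powS using ideal_prod.prod[OF x r] .
        then have "(x \<otimes>\<^bsub>R\<^esub> r) \<odot>\<^bsub>M\<^esub> m = \<zero>\<^bsub>M\<^esub>" using m unfolding T_def by blast
        then show ?thesis using M.smult_assoc1[OF rR xR mM] m_comm[OF xR rR] by simp
      qed
      then show ?thesis unfolding T_def using xR mM by simp
    qed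
    have ST: "S (submod M (T n))" for n
    proof (induction n)
      case 0
      have "T 0 \<subseteq> annih R M a" unfolding T_def annih_def pow0 using aR by blast
      then show ?case using sub_closed[OF M assms(3) annsub Sann Tsub] by blast
    next
      case (Suc n)
      have claim: "finite B \<Longrightarrow> B \<subseteq> A \<Longrightarrow>
          S (submod M {m\<in>T (Suc n). \<forall>x\<in>A - B. x \<odot>\<^bsub>M\<^esub> m = \<zero>\<^bsub>M\<^esub>})" for B
      proof (induction B rule: finite_induct)
        case empty
        have sub: "submodule {m\<in>T (Suc n). \<forall>x\<in>A - {}. x \<odot>\<^bsub>M\<^esub> m = \<zero>\<^bsub>M\<^esub>} R M"
          using ann_submodule[OF M Tsub, of "A - {}"] A(1) by blast
        have "{m\<in>T (Suc n). \<forall>x\<in>A - {}. x \<odot>\<^bsub>M\<^esub> m = \<zero>\<^bsub>M\<^esub>} \<subseteq> annih R M a"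
        proof
          fix m assume m: "m \<in> {m\<in>T (Suc n). \<forall>x\<in>A - {}. x \<odot>\<^bsub>M\<^esub> m = \<zero>\<^bsub>M\<^esub>}"
          then have mM: "m \<in> carrier M" unfolding T_def by blast
          have "Idl\<^bsub>R\<^esub> A \<subseteq> {r\<in>carrier R. r \<odot>\<^bsub>M\<^esub> m = \<zero>\<^bsub>M\<^esub>}"
            using genideal_minimal[OF ann_ideal[OF M mM]] m A(1) by blast
          then show "m \<in> annih R M a" unfolding annih_def using A(3) mM by blast
        qed
        then show ?case using sub_closed[OF M assms(3) annsub Sann sub] by blast
      next
        case (insert y B)
        define V where "V = {m\<in>T (Suc n). \<forall>x\<in>A - insert y B. x \<odot>\<^bsub>M\<^esub> m = \<zero>\<^bsub>M\<^esub>}"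
        have yA: "y \<in> A" using insert by blast
        have yR: "y \<in> carrier R" using yA A(1) by blast
        have ya: "y \<in> a" using genideal_self[OF A(1)] A(3) yA by blast
        have Vsub: "submodule V R M" unfolding V_def
          using ann_submodule[OF M Tsub, of "A - insert y B"] A(1) by blast
        have img: "(\<lambda>m. y \<odot>\<^bsub>M\<^esub> m) ` V \<subseteq> T n" using Tmul[OF ya] unfolding V_def by blast
        have eq: "{m\<in>V. y \<odot>\<^bsub>M\<^esub> m = \<zero>\<^bsub>M\<^esub>} = {m\<in>T (Suc n). \<forall>x\<in>A - B. x \<odot>\<^bsub>M\<^esub> m = \<zero>\<^bsub>M\<^esub>}"
          unfolding V_def using yA insert(2) by blast
        have "S (submod M {m\<in>V. y \<odot>\<^bsub>M\<^esub> m = \<zero>\<^bsub>M\<^esub>})" unfolding eq using insert by blast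
        then show ?case using ext_step[OF M assms(3,4) Vsub yR Tsub Suc.IH img] unfolding V_def by blast
      qed
      have "{m\<in>T (Suc n). \<forall>x\<in>A - A. x \<odot>\<^bsub>M\<^esub> m = \<zero>\<^bsub>M\<^esub>} = T (Suc n)" by simp
      then show ?case using claim[OF A(2) order_refl] by simp
    qed
    have mono: "m \<le> k \<Longrightarrow> T m \<subseteq> T k" for m k
      using lift_Suc_mono_le[of T, OF Tmono] by blast
    have dir: "\<forall>H1\<in>range T. \<forall>H2\<in>range T. \<exists>H3\<in>range T. H1 \<union> H2 \<subseteq> H3"
    proof (intro ballI)
      fix H1 H2 assume "H1 \<in> range T" "H2 \<in> range T"
      then obtain i j where "H1 = T i" "H2 = T j" by blast
      then show "\<exists>H3\<in>range T. H1 \<union> H2 \<subseteq> H3"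
        using mono[of i "max i j"] mono[of j "max i j"] by auto
    qed
    have un: "\<Union>(range T) = carrier M"
    proof
      show "\<Union>(range T) \<subseteq> carrier M" unfolding T_def by blast
      show "carrier M \<subseteq> \<Union>(range T)"
      proof
        fix m assume "m \<in> carrier M"
        then have "m \<in> torsion R a M" using tor by simp
        then obtain n where "m \<in> carrier M" "\<forall>r\<in>ideal_pow R a n. r \<odot>\<^bsub>M\<^esub> m = \<zero>\<^bsub>M\<^esub>"
          unfolding torsion_def by blast
        then have "m \<in> T n" unfolding T_def by blast
        then show "m \<in> \<Union>(range T)" by blast
      qed
    qed
    have ne: "range T \<noteq> {}" by blast
    have allS: "\<forall>H\<in>range T. submodule H R M \<and> S (submod M H)" using Tsub ST by blast
    show "S M" using assms(5)[unfolded closed_direct_unions_def, rule_format, of M "range T"] M ne allS dir un by blast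
  qed
qed

end
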